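(* Let $t$ be an indeterminate, let $\mathbf K$ be an infinite subset of $\mathbb C\setminus\{0,1\}$, and let $\mathbb F$ be a subring of $\mathbb C(t)$ with $$\mathbb C[t,t^{-1}]\subseteq \mathbb F\subseteq\{f/g : f,g\in\mathbb C[t],\ g(1)\neq 0,\ g(\lambda)\neq0\ \forall \lambda\in\mathbf K\}.$$ Let $A$ be the $\mathbb F$-algebra generated by $x_1,\dots,x_n$ subject to finitely many relations, each an $\mathbb F$-linear combination of monomials in the $x_j$. Assume $t-1$ is a nonzero, nonunit, non-zero-divisor of $A$ and that $A_1:=A/(t-1)A$ is commutative; let $\gamma_1:A\to A_1$ be the canonical map, and regard $A_1$ as a Poisson algebra with bracket $\{\gamma_1(a),\gamma_1(b)\}=\gamma_1((t-1)^{-1}(ab-ba))$. For $\lambda\in\mathbf K$ let $A_\lambda$ be the $\mathbb C$-algebra generated by $x_1,\dots,x_n$ subject to the same relations with all coefficients evaluated at $t=\lambda$, and let $\gamma_\lambda:A\to A_\lambda$ be the $\mathbb C$-algebra map with $t\mapsto\lambda$, $x_j\mapsto x_j$. Let $\widehat A=\prod_{\lambda\in\mathbf K}A_\lambda$ and $\gamma:A\to\widehat A$, $\gamma(a)=(\gamma_\lambda(a))_{\lambda}$. Assume there is an $\mathbb F$-basis $\{\xi_i\}$ of $A$ whose images under $\gamma_1$ and under each $\gamma_\lambda$ ($\lambda\in\mathbf K$) are $\mathbb C$-bases of $A_1$ and $A_\lambda$ respectively. Then $\gamma$ is injective, and with $\Gamma=\gamma_1\gamma^{-1}:\gamma(A)\to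 A_1$, for every ideal $I$ of $\widehat A$ the set $\Gamma(I\cap\gamma(A))$ is a Poisson ideal of $A_1$.
   Context: A Poisson algebra is a commutative $\mathbb C$-algebra with a Lie bracket $\{-,-\}$ satisfying $\{ab,c\}=a\{b,c\}+\{a,c\}b$. An ideal $J$ of a Poisson algebra is a Poisson ideal if $\{J,A_1\}\subseteq J$. The injectivity of $\gamma$ (needed to define $\Gamma$) is established in the paper separately. *)

theory Defs
  imports "HOL-Computational_Algebra.Polynomial"
          "HOL-Computational_Algebra.Fraction_Field" "HOL-Algebra.QuotRing"
begin

type_synonym ratfun = "complex poly fract"

definition is_subring_set :: "ratfun set \<Rightarrow> bool" where
  "is_subring_set F \<longleftrightarrow> 0 \<in> F \<and> 1 \<in> F \<and>
     (\<forall>f\<in>F. \<forall>g\<in>F. f + g \<in> F \<and> f - g \<in> F \<and> f * g \<in> F)"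

definition laurent_polys :: "ratfun set" where
  "laurent_polys = {Fract p (monom 1 k) | p k. True}"

definition admissible :: "complex set \<Rightarrow> ratfun set" where
  "admissible K = {Fract p q | p q. poly q 1 \<noteq> 0 \<and> (\<forall>l\<in>K. poly q l \<noteq> 0)}"

definition evalF :: "complex \<Rightarrow> ratfun \<Rightarrow> complex" where
  "evalF l f = (SOME v. \<exists>p q. f = Fract p q \<and> poly q l \<noteq> 0 \<and> v = poly p l / poly q l)"

text \<open>Free (noncommutative) algebra on x_0,...,x_(n-1) with coefficients in S:
  finitely supported functions from words (lists of letters < n) to S,
  with concatenation-convolution product.\<close>
definition free_alg :: "'c::comm_ring_1 set \<Rightarrow> nat \<Rightarrow> (nat list \<Rightarrow> 'c) ring" where
  "free_alg S n =
    \<lparr>carrier = {f. finite {w. f w \<noteq> 0} \<and> (\<forall>w. f w \<in> S) \<and> (\<forall>w. f w \<noteq> 0 \<longrightarrow> set w \<subseteq> {..<n})},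
     mult = (\<lambda>f g w. \<Sum>i\<le>length w. f (take i w) * g (drop i w)),
     one = (\<lambda>w. if w = [] then 1 else 0),
     zero = (\<lambda>w. 0),
     add = (\<lambda>f g w. f w + g w)\<rparr>"

definition scal :: "'c::zero \<Rightarrow> nat list \<Rightarrow> 'c" where
  "scal c = (\<lambda>w. if w = [] then c else 0)"

definition relI :: "ratfun set \<Rightarrow> nat \<Rightarrow> (nat list \<Rightarrow> ratfun) set \<Rightarrow> (nat list \<Rightarrow> ratfun) set" where
  "relI F n R = genideal (free_alg F n) R"

definition algA :: "ratfun set \<Rightarrow> nat \<Rightarrow> (nat list \<Rightarrow> ratfun) set \<Rightarrow> (nat list \<Rightarrow> ratfun) set ring" where
  "algA F n R = free_alg F n Quot relI F n R"

definition scalA :: "ratfun set \<Rightarrow> nat \<Rightarrow> (nat list \<Rightarrow> ratfun) set \<Rightarrow> ratfun \<Rightarrow> (nat list \<Rightarrow> ratfun) set" where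
  "scalA F n R c = relI F n R +>\<^bsub>free_alg F n\<^esub> scal c"

definition tm1 :: "ratfun set \<Rightarrow> nat \<Rightarrow> (nat list \<Rightarrow> ratfun) set \<Rightarrow> (nat list \<Rightarrow> ratfun) set" where
  "tm1 F n R = scalA F n R (Fract [:-1, 1:] 1)"

definition tI :: "ratfun set \<Rightarrow> nat \<Rightarrow> (nat list \<Rightarrow> ratfun) set \<Rightarrow> (nat list \<Rightarrow> ratfun) set set" where
  "tI F n R = genideal (algA F n R) {tm1 F n R}"

definition algA1 where
  "algA1 F n R = algA F n R Quot tI F n R"

definition gamma1 where
  "gamma1 F n R a = tI F n R +>\<^bsub>algA F n R\<^esub> a"

definition pbracket where
  "pbracket F n R X Y = (SOME z. \<exists>a b c. a \<in> carrier (algA F n R) \<and> b \<in> carrier (algA F n R)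
      \<and> c \<in> carrier (algA F n R) \<and> gamma1 F n R a = X \<and> gamma1 F n R b = Y
      \<and> tm1 F n R \<otimes>\<^bsub>algA F n R\<^esub> c
          = a \<otimes>\<^bsub>algA F n R\<^esub> b \<ominus>\<^bsub>algA F n R\<^esub> b \<otimes>\<^bsub>algA F n R\<^esub> a
      \<and> z = gamma1 F n R c)"

definition poisson_ideal where
  "poisson_ideal F n R J \<longleftrightarrow> ideal J (algA1 F n R) \<and>
     (\<forall>X\<in>J. \<forall>Y\<in>carrier (algA1 F n R). pbracket F n R X Y \<in> J)"

definition evalw :: "complex \<Rightarrow> (nat list \<Rightarrow> ratfun) \<Rightarrow> nat list \<Rightarrow> complex" where
  "evalw l f = (\<lambda>w. evalF l (f w))"

definition relIl where
  "relIl n R l = genideal (free_alg (UNIV :: complex set) n) (evalw l ` R)"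

definition algAl where
  "algAl n R l = free_alg (UNIV :: complex set) n Quot relIl n R l"

definition scalAl where
  "scalAl n R l c = relIl n R l +>\<^bsub>free_alg (UNIV :: complex set) n\<^esub> scal c"

definition gammal where
  "gammal n R l a = relIl n R l +>\<^bsub>free_alg (UNIV :: complex set) n\<^esub> evalw l (SOME f. f \<in> a)"

definition prod_ring :: "'k set \<Rightarrow> ('k \<Rightarrow> ('a, 'm) ring_scheme) \<Rightarrow> ('k \<Rightarrow> 'a) ring" where
  "prod_ring K Rs =
    \<lparr>carrier = (\<Pi>\<^sub>E k\<in>K. carrier (Rs k)),
     mult = (\<lambda>f g. \<lambda>k\<in>K. f k \<otimes>\<^bsub>Rs k\<^esub> g k),
     one = (\<lambda>k\<in>K. \<one>\<^bsub>Rs k\<^esub>),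
     zero = (\<lambda>k\<in>K. \<zero>\<^bsub>Rs k\<^esub>),
     add = (\<lambda>f g. \<lambda>k\<in>K. f k \<oplus>\<^bsub>Rs k\<^esub> g k)\<rparr>"

definition Ahat where
  "Ahat K n R = prod_ring K (algAl n R)"

definition gammahat where
  "gammahat K n R a = (\<lambda>l\<in>K. gammal n R l a)"

definition is_basis :: "('a, 'm) ring_scheme \<Rightarrow> ('c::zero \<Rightarrow> 'a) \<Rightarrow> 'c set \<Rightarrow> 'i set \<Rightarrow> ('i \<Rightarrow> 'a) \<Rightarrow> bool" where
  "is_basis R sc S J xi \<longleftrightarrow> xi \<in> J \<rightarrow> carrier R \<and>
     (\<forall>x\<in>carrier R. \<exists>!c. c \<in> J \<rightarrow>\<^sub>E S \<and> finite {i\<in>J. c i \<noteq> 0} \<and>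
          x = finsum R (\<lambda>i. sc (c i) \<otimes>\<^bsub>R\<^esub> xi i) {i\<in>J. c i \<noteq> 0})"

end

theory Submission
  imports Defs
begin
lemma conv_assoc_pt:
  fixes f g h :: "nat list \<Rightarrow> 'c::comm_ring_1"
  shows "(\<Sum>k\<le>length w. (\<Sum>i\<le>length (take k w). f (take i (take k w)) * g (drop i (take k w))) * h (drop k w))
       = (\<Sum>i\<le>length w. f (take i w) * (\<Sum>j\<le>length (drop i w). g (take j (drop i w)) * h (drop j (drop i w))))"
proof -
  define G where "G i k = f (take i w) * g (take (k-i) (drop i w)) * h (drop k w)" for i k
  have lhs: "(\<Sum>k\<le>length w. (\<Sum>i\<le>length (take k w). f (take i (take k w)) * g (drop i (take k w))) * h (drop k w))
      = (\<Sum>k\<le>length w. \<Sum>i\<le>length w. if i \<le> k then G i k else 0)"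
  proof (rule sum.cong[OF refl])
    fix k assume k: "k \<in> {..length w}"
    have "(\<Sum>i\<le>length (take k w). f (take i (take k w)) * g (drop i (take k w))) * h (drop k w)
        = (\<Sum>i\<le>k. G i k)"
      using k by (auto simp: G_def sum_distrib_right min_def take_drop intro!: sum.cong)
    also have "\<dots> = (\<Sum>i\<le>length w. if i \<le> k then G i k else 0)"
      using k by (simp add: sum.If_cases) (rule sum.cong; auto)
    finally show "(\<Sum>i\<le>length (take k w). f (take i (take k w)) * g (drop i (take k w))) * h (drop k w) = (\<Sum>i\<le>length w. if i \<le> k then G i k else 0)" .
  qed
  have rhs: "(\<Sum>i\<le>length w. f (take i w) * (\<Sum>j\<le>length (drop i w). g (take j (drop i w)) * h (drop j (drop i w))))
      = (\<Sum>i\<le>length w. \<Sum>k\<le>length w. if i \<le> k then G i k else 0)"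
  proof (rule sum.cong[OF refl])
    fix i assume i: "i \<in> {..length w}"
    have "f (take i w) * (\<Sum>j\<le>length (drop i w). g (take j (drop i w)) * h (drop j (drop i w)))
        = (\<Sum>j\<le>length w - i. G i (i + j))"
      using i by (simp add: G_def sum_distrib_left mult.assoc add.commute)
    also have "\<dots> = (\<Sum>k\<in>{i..length w}. G i k)"
    proof -
      have "{i..length w} = (\<lambda>j. i + j) ` {..length w - i}" using i
        apply (auto simp: image_iff)
        by (metis atMost_iff diff_le_mono le_add_diff_inverse)
      then show ?thesis by (simp add: sum.reindex)
    qed
    also have "\<dots> = (\<Sum>k\<le>length w. if i \<le> k then G i k else 0)"
      by (simp add: sum.If_cases) (rule sum.cong; auto)
    finally show "f (take i w) * (\<Sum>j\<le>length (drop i w). g (take j (drop i w)) * h (drop j (drop i w))) = (\<Sum>k\<le>length w. if i \<le> k then G i k else 0)" .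
  qed
  show ?thesis unfolding lhs rhs by (rule sum.swap)
qed

definition sr :: "'c::comm_ring_1 set \<Rightarrow> bool" where
  "sr S \<longleftrightarrow> 0 \<in> S \<and> 1 \<in> S \<and> (\<forall>x\<in>S. \<forall>y\<in>S. x + y \<in> S \<and> x - y \<in> S \<and> x * y \<in> S)"

lemma sr_UNIV: "sr UNIV" by (simp add: sr_def)

lemma sr_sum: assumes "sr S" "\<And>i. i \<in> A \<Longrightarrow> f i \<in> S" shows "sum f A \<in> S"
  using assms(2)
proof (induction A rule: infinite_finite_induct)
  case (insert x F) then show ?case using assms(1) by (simp add: sr_def)
qed (use assms(1) in \<open>auto simp: sr_def\<close>)

lemma sr_neg: "sr S \<Longrightarrow> x \<in> S \<Longrightarrow> - x \<in> S"
  unfolding sr_def by (metis diff_0)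

lemma fa_carrier: "carrier (free_alg S n) = {f. finite {w. f w \<noteq> 0} \<and> (\<forall>w. f w \<in> S) \<and> (\<forall>w. f w \<noteq> 0 \<longrightarrow> set w \<subseteq> {..<n})}"
  by (simp add: free_alg_def)
lemma fa_mult: "mult (free_alg S n) f g = (\<lambda>w. \<Sum>i\<le>length w. f (take i w) * g (drop i w))"
  by (simp add: free_alg_def)
lemma fa_add: "add (free_alg S n) f g = (\<lambda>w. f w + g w)"
  by (simp add: free_alg_def)
lemma fa_one: "one (free_alg S n) = (\<lambda>w. if w = [] then 1 else 0)"
  by (simp add: free_alg_def)
lemma fa_zero: "zero (free_alg S n) = (\<lambda>w. 0)"
  by (simp add: free_alg_def)

lemma conv_nz:
  assumes "(\<Sum>i\<le>length w. f (take i w) * g (drop i w)) \<noteq> (0::'c::comm_ring_1)"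
  shows "\<exists>i. f (take i w) \<noteq> 0 \<and> g (drop i w) \<noteq> 0"
proof (rule ccontr)
  assume "\<not> ?thesis"
  then have "\<forall>i. f (take i w) * g (drop i w) = 0" by (metis mult_zero_left mult_zero_right)
  with assms show False by simp
qed

lemma fa_mult_closed:
  assumes S: "sr S" and f: "f \<in> carrier (free_alg S n)" and g: "g \<in> carrier (free_alg S n)"
  shows "f \<otimes>\<^bsub>free_alg S n\<^esub> g \<in> carrier (free_alg S n)"
proof -
  let ?h = "\<lambda>w. \<Sum>i\<le>length w. f (take i w) * g (drop i w)"
  have sub: "{w. ?h w \<noteq> 0} \<subseteq> (\<lambda>(u,v). u @ v) ` ({u. f u \<noteq> 0} \<times> {v. g v \<noteq> 0})"
  proof
    fix w assume "w \<in> {w. ?h w \<noteq> 0}"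
    then have "?h w \<noteq> 0" by simp
    from conv_nz[OF this] obtain i where "f (take i w) \<noteq> 0" "g (drop i w) \<noteq> 0" by blast
    then show "w \<in> (\<lambda>(u,v). u @ v) ` ({u. f u \<noteq> 0} \<times> {v. g v \<noteq> 0})"
      by (auto intro!: image_eqI[of _ _ "(take i w, drop i w)"])
  qed
  have fin: "finite {w. ?h w \<noteq> 0}"
    using f g by (intro finite_subset[OF sub]) (auto simp: fa_carrier)
  have inS: "?h w \<in> S" for w
    using f g S by (intro sr_sum) (auto simp: fa_carrier sr_def)
  have lett: "set w \<subseteq> {..<n}" if hw: "?h w \<noteq> 0" for w
  proof -
    obtain i where i: "f (take i w) \<noteq> 0" "g (drop i w) \<noteq> 0" using conv_nz[OF hw] by blast
    have "set (take i w) \<subseteq> {..<n}" "set (drop i w) \<subseteq> {..<n}"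
      using i f g by (auto simp: fa_carrier)
    then show ?thesis by (metis append_take_drop_id le_sup_iff set_append)
  qed
  show ?thesis using fin inS lett by (simp add: fa_carrier fa_mult)
qed

lemma fa_one_mult: "(\<Sum>i\<le>length w. (if take i w = [] then 1 else 0) * f (drop i w)) = (f w :: 'c::comm_ring_1)"
proof (cases w)
  case Nil then show ?thesis by simp
next
  case (Cons a w')
  then show ?thesis by (simp add: sum.atMost_Suc_shift del: sum.atMost_Suc)
qed

lemma fa_mult_one: "(\<Sum>i\<le>length w. f (take i w) * (if drop i w = [] then 1 else 0)) = (f w :: 'c::comm_ring_1)"
proof -
  have "(\<Sum>i\<le>length w. f (take i w) * (if drop i w = [] then 1 else 0)) = (\<Sum>i\<in>{length w}. f (take i w))"
    by (rule sum.mono_neutral_cong_right) auto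
  then show ?thesis by simp
qed

lemma free_alg_ring:
  assumes S: "sr S"
  shows "ring (free_alg S n)"
proof (rule ringI)
  show "abelian_group (free_alg S n)"
  proof (rule abelian_groupI)
    fix x y assume "x \<in> carrier (free_alg S n)" "y \<in> carrier (free_alg S n)"
    then show "x \<oplus>\<^bsub>free_alg S n\<^esub> y \<in> carrier (free_alg S n)"
      using S unfolding fa_carrier fa_add sr_def
      apply (auto intro: finite_subset[of _ "{w. x w \<noteq> 0} \<union> {w. y w \<noteq> 0}"])
      by (metis add.left_neutral add.right_neutral lessThan_iff subsetD)
  next
    show "\<zero>\<^bsub>free_alg S n\<^esub> \<in> carrier (free_alg S n)" using S by (simp add: fa_carrier fa_zero sr_def)
  next
    fix x y z show "x \<oplus>\<^bsub>free_alg S n\<^esub> y \<oplus>\<^bsub>free_alg S n\<^esub> z = x \<oplus>\<^bsub>free_alg S n\<^esub> (y \<oplus>\<^bsub>free_alg S n\<^esub> z)"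
      by (simp add: fa_add algebra_simps)
  next
    fix x y show "x \<oplus>\<^bsub>free_alg S n\<^esub> y = y \<oplus>\<^bsub>free_alg S n\<^esub> x"
      by (simp add: fa_add algebra_simps)
  next
    fix x show "\<zero>\<^bsub>free_alg S n\<^esub> \<oplus>\<^bsub>free_alg S n\<^esub> x = x" by (simp add: fa_add fa_zero)
  next
    fix x assume x: "x \<in> carrier (free_alg S n)"
    show "\<exists>y\<in>carrier (free_alg S n). y \<oplus>\<^bsub>free_alg S n\<^esub> x = \<zero>\<^bsub>free_alg S n\<^esub>"
      by (rule bexI[of _ "\<lambda>w. - x w"]) (use x S sr_neg in \<open>auto simp: fa_add fa_zero fa_carrier\<close>)
  qed
next
  show "monoid (free_alg S n)"
  proof (rule monoidI)
    fix x y assume "x \<in> carrier (free_alg S n)" "y \<in> carrier (free_alg S n)"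
    then show "x \<otimes>\<^bsub>free_alg S n\<^esub> y \<in> carrier (free_alg S n)" using fa_mult_closed S by blast
  next
    show "\<one>\<^bsub>free_alg S n\<^esub> \<in> carrier (free_alg S n)"
    proof -
      have "{w. (if w = [] then 1 else (0::'a)) \<noteq> 0} \<subseteq> {[]}" by auto
      then show ?thesis using S by (auto simp: fa_carrier fa_one sr_def intro: finite_subset)
    qed
  next
    fix x y z
    show "x \<otimes>\<^bsub>free_alg S n\<^esub> y \<otimes>\<^bsub>free_alg S n\<^esub> z = x \<otimes>\<^bsub>free_alg S n\<^esub> (y \<otimes>\<^bsub>free_alg S n\<^esub> z)"
      unfolding fa_mult by (rule ext) (rule conv_assoc_pt)
  next
    fix x show "\<one>\<^bsub>free_alg S n\<^esub> \<otimes>\<^bsub>free_alg S n\<^esub> x = x"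
      unfolding fa_mult fa_one by (rule ext) (rule fa_one_mult)
  next
    fix x show "x \<otimes>\<^bsub>free_alg S n\<^esub> \<one>\<^bsub>free_alg S n\<^esub> = x"
      unfolding fa_mult fa_one by (rule ext) (rule fa_mult_one)
  qed
next
  fix x y z show "(x \<oplus>\<^bsub>free_alg S n\<^esub> y) \<otimes>\<^bsub>free_alg S n\<^esub> z = x \<otimes>\<^bsub>free_alg S n\<^esub> z \<oplus>\<^bsub>free_alg S n\<^esub> y \<otimes>\<^bsub>free_alg S n\<^esub> z"
    by (simp add: fa_mult fa_add algebra_simps sum.distrib)
next
  fix x y z show "z \<otimes>\<^bsub>free_alg S n\<^esub> (x \<oplus>\<^bsub>free_alg S n\<^esub> y) = z \<otimes>\<^bsub>free_alg S n\<^esub> x \<oplus>\<^bsub>free_alg S n\<^esub> z \<otimes>\<^bsub>free_alg S n\<^esub> y"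
    by (simp add: fa_mult fa_add algebra_simps sum.distrib)
qed

definition good :: "complex \<Rightarrow> ratfun \<Rightarrow> bool" where
  "good l f \<longleftrightarrow> (\<exists>p q. f = Fract p q \<and> poly q l \<noteq> 0)"

lemma evalF_eq:
  assumes "poly q l \<noteq> 0"
  shows "evalF l (Fract p q) = poly p l / poly q l"
proof -
  have ex: "\<exists>v. \<exists>p' q'. Fract p q = Fract p' q' \<and> poly q' l \<noteq> 0 \<and> v = poly p' l / poly q' l"
    using assms by blast
  have uniq: "v = poly p l / poly q l" if "\<exists>p' q'. Fract p q = Fract p' q' \<and> poly q' l \<noteq> 0 \<and> v = poly p' l / poly q' l" for v
  proof -
    from that obtain p' q' where h: "Fract p q = Fract p' q'" "poly q' l \<noteq> 0" "v = poly p' l / poly q' l" by blast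
    have "q \<noteq> 0" "q' \<noteq> 0" using assms h(2) by auto
    then have "p * q' = p' * q" using h(1) eq_fract(1) by blast
    then have "poly p l * poly q' l = poly p' l * poly q l" by (metis poly_mult)
    then show ?thesis using h(2,3) assms by (simp add: frac_eq_eq)
  qed
  show ?thesis unfolding evalF_def using someI_ex[OF ex] uniq by blast
qed


lemma good_add: "good l f \<Longrightarrow> good l g \<Longrightarrow> good l (f + g) \<and> evalF l (f + g) = evalF l f + evalF l g"
proof -
  assume "good l f" "good l g"
  then obtain p q p' q' where f: "f = Fract p q" "poly q l \<noteq> 0" and g: "g = Fract p' q'" "poly q' l \<noteq> 0"
    unfolding good_def by blast
  have "q \<noteq> 0" "q' \<noteq> 0" using f g by auto
  then have s: "f + g = Fract (p * q' + p' * q) (q * q')" using f g by simp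
  have nz: "poly (q * q') l \<noteq> 0" using f g by simp
  have "evalF l (f + g) = (poly p l * poly q' l + poly p' l * poly q l) / (poly q l * poly q' l)"
    unfolding s using nz by (simp add: evalF_eq)
  also have "\<dots> = evalF l f + evalF l g" using f g by (simp add: evalF_eq add_frac_eq)
  finally show ?thesis using nz unfolding s good_def by blast
qed

lemma good_mult: "good l f \<Longrightarrow> good l g \<Longrightarrow> good l (f * g) \<and> evalF l (f * g) = evalF l f * evalF l g"
proof -
  assume "good l f" "good l g"
  then obtain p q p' q' where f: "f = Fract p q" "poly q l \<noteq> 0" and g: "g = Fract p' q'" "poly q' l \<noteq> 0"
    unfolding good_def by blast
  have s: "f * g = Fract (p * p') (q * q')" using f g by simp
  have nz: "poly (q * q') l \<noteq> 0" using f g by simp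
  have "evalF l (f * g) = (poly p l * poly p' l) / (poly q l * poly q' l)"
    unfolding s using nz by (simp add: evalF_eq)
  also have "\<dots> = evalF l f * evalF l g" using f g by (simp add: evalF_eq)
  finally show ?thesis using nz unfolding s good_def by blast
qed

lemma good_neg: "good l f \<Longrightarrow> good l (- f) \<and> evalF l (- f) = - evalF l f"
proof -
  assume "good l f"
  then obtain p q where f: "f = Fract p q" "poly q l \<noteq> 0" unfolding good_def by blast
  then show ?thesis unfolding good_def by (auto simp: evalF_eq)
qed

lemma good_diff: "good l f \<Longrightarrow> good l g \<Longrightarrow> good l (f - g) \<and> evalF l (f - g) = evalF l f - evalF l g"
  using good_add[of l f "- g"] good_neg[of l g] by simp

lemma good_0: "good l 0 \<and> evalF l 0 = 0"
proof -
  have "good l (Fract 0 1)" unfolding good_def by (rule exI[of _ 0], rule exI[of _ 1]) simp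
  then show ?thesis unfolding Zero_fract_def by (simp add: evalF_eq)
qed

lemma good_1: "good l 1 \<and> evalF l 1 = 1"
proof -
  have "good l (Fract 1 1)" unfolding good_def by (rule exI[of _ 1], rule exI[of _ 1]) simp
  then show ?thesis unfolding One_fract_def by (simp add: evalF_eq)
qed


lemma sr_good: "sr {f. good l f}"
proof -
  have "good l x \<Longrightarrow> good l y \<Longrightarrow> good l (x + y) \<and> good l (x - y) \<and> good l (x * y)" for x y
    using good_add[of l x y] good_diff[of l x y] good_mult[of l x y] by simp
  then show ?thesis unfolding sr_def using good_0 good_1 by simp
qed

lemma good_sum: "(\<And>i. i \<in> A \<Longrightarrow> good l (h i)) \<Longrightarrow> good l (sum h A) \<and> evalF l (sum h A) = (\<Sum>i\<in>A. evalF l (h i))"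
proof (induction A rule: infinite_finite_induct)
  case (insert x F)
  then have a: "good l (h x)" "good l (sum h F)" "evalF l (sum h F) = (\<Sum>i\<in>F. evalF l (h i))" by auto
  show ?case using insert(1,2) good_add[OF a(1,2)] a(3) by simp
qed (auto simp: good_0)

lemma admissible_good: "f \<in> admissible K \<Longrightarrow> l \<in> K \<Longrightarrow> good l f"
  unfolding admissible_def good_def by blast

lemma good_const: "good l (Fract p 1) \<and> evalF l (Fract p 1) = poly p l"
proof -
  have "good l (Fract p 1)" unfolding good_def by (rule exI[of _ p], rule exI[of _ 1]) simp
  then show ?thesis by (simp add: evalF_eq)
qed

lemma evalw_carrier:
  assumes "S \<subseteq> {f. good l f}" "f \<in> carrier (free_alg S n)"
  shows "evalw l f \<in> carrier (free_alg (UNIV::complex set) n)"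
proof -
  have "{w. evalw l f w \<noteq> 0} \<subseteq> {w. f w \<noteq> 0}" using good_0 by (auto simp: evalw_def)
  moreover have "finite {w. f w \<noteq> 0}" using assms by (simp add: fa_carrier)
  moreover have "evalw l f w \<noteq> 0 \<Longrightarrow> set w \<subseteq> {..<n}" for w
  proof -
    assume "evalw l f w \<noteq> 0"
    then have "f w \<noteq> 0" using good_0 by (auto simp: evalw_def)
    then show ?thesis using assms by (simp add: fa_carrier)
  qed
  ultimately show ?thesis by (auto simp: fa_carrier intro: finite_subset)
qed

lemma evalw_hom:
  assumes S: "sr S" "S \<subseteq> {f. good l f}"
  shows "evalw l \<in> ring_hom (free_alg S n) (free_alg (UNIV::complex set) n)"
proof (rule ring_hom_memI)
  fix x assume "x \<in> carrier (free_alg S n)"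
  then show "evalw l x \<in> carrier (free_alg UNIV n)" using evalw_carrier S by blast
next
  fix x y assume x: "x \<in> carrier (free_alg S n)" and y: "y \<in> carrier (free_alg S n)"
  have gx: "good l (x w)" "good l (y w)" for w using x y S by (auto simp: fa_carrier)
  have gm: "good l (x u * y v) \<and> evalF l (x u * y v) = evalF l (x u) * evalF l (y v)" for u v
    using good_mult gx by blast
  show "evalw l (x \<otimes>\<^bsub>free_alg S n\<^esub> y) = evalw l x \<otimes>\<^bsub>free_alg UNIV n\<^esub> evalw l y"
    unfolding fa_mult evalw_def
  proof (rule ext)
    fix w
    show "evalF l (\<Sum>i\<le>length w. x (take i w) * y (drop i w)) = (\<Sum>i\<le>length w. evalF l (x (take i w)) * evalF l (y (drop i w)))"
      using good_sum[of "{..length w}" l "\<lambda>i. x (take i w) * y (drop i w)"] gm by simp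
  qed
  show "evalw l (x \<oplus>\<^bsub>free_alg S n\<^esub> y) = evalw l x \<oplus>\<^bsub>free_alg UNIV n\<^esub> evalw l y"
    unfolding fa_add evalw_def by (rule ext) (simp add: good_add gx)
next
  show "evalw l \<one>\<^bsub>free_alg S n\<^esub> = \<one>\<^bsub>free_alg UNIV n\<^esub>"
    unfolding fa_one evalw_def by (rule ext) (simp add: good_0 good_1)
qed

lemma evalw_scal: "evalw l (scal c) = scal (evalF l c)"
  unfolding evalw_def scal_def by (rule ext) (simp add: good_0)

lemma quot_carrier_ex:
  assumes "ideal I R" "X \<in> carrier (R Quot I)"
  shows "\<exists>x\<in>carrier R. X = I +>\<^bsub>R\<^esub> x"
  using assms(2) unfolding FactRing_def A_RCOSETS_def' by auto

lemma quot_mem: "ideal I R \<Longrightarrow> x \<in> carrier R \<Longrightarrow> I +>\<^bsub>R\<^esub> x \<in> carrier (R Quot I)"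
  unfolding FactRing_def A_RCOSETS_def' by auto

lemma quot_eq_iff:
  fixes R (structure)
  assumes "ideal I R" "x \<in> carrier R" "y \<in> carrier R"
  shows "(I +>\<^bsub>R\<^esub> x = I +>\<^bsub>R\<^esub> y) \<longleftrightarrow> x \<ominus>\<^bsub>R\<^esub> y \<in> I"
proof -
  interpret ideal I R by fact
  have "(I +> x = I +> y) \<longleftrightarrow> x \<in> I +> y"
    using a_repr_independence'[of x y] a_repr_independenceD[of x y] assms by auto
  also have "\<dots> \<longleftrightarrow> x \<ominus> y \<in> I" using a_rcos_module_minus[OF ring_axioms] assms by blast
  finally show ?thesis .
qed

lemma quot_zero_iff:
  fixes R (structure)
  assumes "ideal I R" "x \<in> carrier R"
  shows "(I +>\<^bsub>R\<^esub> x = \<zero>\<^bsub>R Quot I\<^esub>) \<longleftrightarrow> x \<in> I"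
proof -
  interpret ideal I R by fact
  have "\<zero>\<^bsub>R Quot I\<^esub> = I +> \<zero>" by (simp add: FactRing_def a_rcos_const)
  moreover have "x \<ominus> \<zero> = x" using assms(2) by (simp add: minus_eq)
  ultimately show ?thesis using quot_eq_iff[OF assms(1) assms(2) zero_closed] assms by simp
qed

lemma quot_hom:
  fixes R (structure)
  assumes I: "ideal I R" and S: "ring S" and phi: "phi \<in> ring_hom R S"
    and g: "\<And>x. x \<in> carrier R \<Longrightarrow> g (I +>\<^bsub>R\<^esub> x) = phi x"
  shows "g \<in> ring_hom (R Quot I) S"
proof -
  interpret ideal I R by fact
  have h: "((+>) I) \<in> ring_hom R (R Quot I)" by (rule rcos_ring_hom)
  show ?thesis
  proof (rule ring_hom_memI)
    fix X assume "X \<in> carrier (R Quot I)"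
    then obtain x where x: "x \<in> carrier R" "X = I +> x" using quot_carrier_ex[OF I] by blast
    then show "g X \<in> carrier S" using g phi ring_hom_closed by fastforce
  next
    fix X Y assume "X \<in> carrier (R Quot I)" "Y \<in> carrier (R Quot I)"
    then obtain x y where x: "x \<in> carrier R" "X = I +> x" and y: "y \<in> carrier R" "Y = I +> y"
      using quot_carrier_ex[OF I] by metis
    have "X \<otimes>\<^bsub>R Quot I\<^esub> Y = I +> (x \<otimes> y)" using ring_hom_mult[OF h x(1) y(1)] x y by simp
    then show "g (X \<otimes>\<^bsub>R Quot I\<^esub> Y) = g X \<otimes>\<^bsub>S\<^esub> g Y"
      using g x y phi by (simp add: ring_hom_mult)
    have "X \<oplus>\<^bsub>R Quot I\<^esub> Y = I +> (x \<oplus> y)" using ring_hom_add[OF h x(1) y(1)] x y by simp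
    then show "g (X \<oplus>\<^bsub>R Quot I\<^esub> Y) = g X \<oplus>\<^bsub>S\<^esub> g Y"
      using g x y phi by (simp add: ring_hom_add)
  next
    have "\<one>\<^bsub>R Quot I\<^esub> = I +> \<one>" by (simp add: FactRing_def)
    then show "g \<one>\<^bsub>R Quot I\<^esub> = \<one>\<^bsub>S\<^esub>" using g phi by (simp add: ring_hom_one)
  qed
qed

lemma hom_finsum':
  assumes "ring R" "ring S" "h \<in> ring_hom R S" "f \<in> A \<rightarrow> carrier R"
  shows "h (finsum R f A) = finsum S (h \<circ> f) A"
proof -
  interpret ring_hom_ring R S h using assms by (simp add: ring_hom_ringI2)
  show ?thesis using assms(4) by (induct A rule: infinite_finite_induct) (auto simp: Pi_def)
qed

lemma sr_is_subring: "is_subring_set F \<Longrightarrow> sr F"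
  unfolding is_subring_set_def sr_def by blast

lemma scal_mult_left: "mult (free_alg S n) (scal c) f = (\<lambda>w. c * f w)"
proof (rule ext)
  fix w
  have "(\<Sum>i\<le>length w. scal c (take i w) * f (drop i w)) = c * (\<Sum>i\<le>length w. (if take i w = [] then 1 else 0) * f (drop i w))"
    by (simp add: sum_distrib_left scal_def) (rule sum.cong; simp)
  then show "mult (free_alg S n) (scal c) f w = c * f w" by (simp only: fa_mult fa_one_mult)
qed

lemma scal_mult_right: "mult (free_alg S n) f (scal c) = (\<lambda>w. c * f w)"
proof (rule ext)
  fix w
  have "(\<Sum>i\<le>length w. f (take i w) * scal c (drop i w)) = c * (\<Sum>i\<le>length w. f (take i w) * (if drop i w = [] then 1 else 0))"
    by (simp add: sum_distrib_left scal_def) (rule sum.cong; simp)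
  then show "mult (free_alg S n) f (scal c) w = c * f w" by (simp only: fa_mult fa_mult_one)
qed

lemma scal_central: "scal c \<otimes>\<^bsub>free_alg S n\<^esub> f = f \<otimes>\<^bsub>free_alg S n\<^esub> scal c"
  by (simp add: scal_mult_left scal_mult_right)

lemma scal_scal: "scal c \<otimes>\<^bsub>free_alg S n\<^esub> scal d = scal (c * d)"
  by (simp add: scal_mult_left) (auto simp: scal_def)

lemma scal_one: "scal 1 = \<one>\<^bsub>free_alg S n\<^esub>"
  by (simp add: fa_one scal_def)

lemma scal_carrier: "sr S \<Longrightarrow> c \<in> S \<Longrightarrow> scal c \<in> carrier (free_alg S n)"
proof -
  assume "sr S" "c \<in> S"
  moreover have "{w. scal c w \<noteq> 0} \<subseteq> {[]}" by (auto simp: scal_def)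
  ultimately show ?thesis by (auto simp: fa_carrier scal_def sr_def intro: finite_subset)
qed

locale thsetup =
  fixes K :: "complex set" and F :: "ratfun set" and n :: nat and R :: "(nat list \<Rightarrow> ratfun) set"
  assumes F_ring: "is_subring_set F" and F_lower: "laurent_polys \<subseteq> F" and F_upper: "F \<subseteq> admissible K"
    and R_sub: "R \<subseteq> carrier (free_alg F n)" and K_sub: "K \<subseteq> - {0, 1}"
begin

abbreviation "FA \<equiv> free_alg F n"
abbreviation "CA \<equiv> free_alg (UNIV::complex set) n"
abbreviation "A \<equiv> algA F n R"

lemma srF: "sr F" using F_ring by (rule sr_is_subring)
lemma FA_ring: "ring FA" using srF by (rule free_alg_ring)
lemma CA_ring: "ring CA" using sr_UNIV by (rule free_alg_ring)
lemma relI_ideal: "ideal (relI F n R) FA"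
  unfolding relI_def using ring.genideal_ideal[OF FA_ring R_sub] .
lemma A_ring: "ring A" unfolding algA_def using ideal.quotient_is_ring[OF relI_ideal] .

lemma goodF: "l \<in> K \<Longrightarrow> F \<subseteq> {f. good l f}"
  using F_upper admissible_good by blast

lemma evalw_homF: assumes "l \<in> K" shows "evalw l \<in> ring_hom FA CA"
  by (rule evalw_hom[OF srF goodF[OF assms]])

lemma evalR: assumes "l \<in> K" shows "evalw l ` R \<subseteq> carrier CA"
proof
  fix y assume "y \<in> evalw l ` R"
  then obtain r where "r \<in> R" "y = evalw l r" by blast
  then show "y \<in> carrier CA" using ring_hom_closed[OF evalw_homF[OF assms]] R_sub by blast
qed

lemma relIl_ideal: assumes "l \<in> K" shows "ideal (relIl n R l) CA"
  unfolding relIl_def by (rule ring.genideal_ideal[OF CA_ring evalR[OF assms]])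

lemma Al_ring: assumes "l \<in> K" shows "ring (algAl n R l)"
  unfolding algAl_def by (rule ideal.quotient_is_ring[OF relIl_ideal[OF assms]])

lemma relI_eval: assumes l: "l \<in> K" and x: "x \<in> relI F n R" shows "evalw l x \<in> relIl n R l"
proof -
  interpret h: ring_hom_ring FA CA "evalw l"
    using evalw_homF[OF l] FA_ring CA_ring by (simp add: ring_hom_ringI2)
  have "ideal {r \<in> carrier FA. evalw l r \<in> relIl n R l} FA"
    by (rule h.ideal_vimage[OF relIl_ideal[OF l]])
  moreover have "R \<subseteq> {r \<in> carrier FA. evalw l r \<in> relIl n R l}"
    using R_sub ring.genideal_self[OF CA_ring evalR[OF l]] unfolding relIl_def by blast
  ultimately have "relI F n R \<subseteq> {r \<in> carrier FA. evalw l r \<in> relIl n R l}"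
    unfolding relI_def by (rule ring.genideal_minimal[OF FA_ring])
  then show ?thesis using x by blast
qed

lemma gammal_rep:
  assumes l: "l \<in> K" and x: "x \<in> carrier FA"
  shows "gammal n R l (relI F n R +>\<^bsub>FA\<^esub> x) = relIl n R l +>\<^bsub>CA\<^esub> evalw l x"
proof -
  interpret I: ideal "relI F n R" FA by (rule relI_ideal)
  interpret h: ring_hom_ring FA CA "evalw l"
    using evalw_homF[OF l] FA_ring CA_ring by (simp add: ring_hom_ringI2)
  define f where "f = (SOME f. f \<in> relI F n R +>\<^bsub>FA\<^esub> x)"
  have "x \<in> relI F n R +>\<^bsub>FA\<^esub> x" using I.a_rcos_self x by blast
  then have f: "f \<in> relI F n R +>\<^bsub>FA\<^esub> x" unfolding f_def using someI[of "\<lambda>f. f \<in> relI F n R +>\<^bsub>FA\<^esub> x" x] by blast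
  have fc: "f \<in> carrier FA" using f x I.a_elemrcos_carrier by blast
  have "f \<ominus>\<^bsub>FA\<^esub> x \<in> relI F n R" using I.a_rcos_module_minus[OF FA_ring x fc] f by blast
  then have "evalw l (f \<ominus>\<^bsub>FA\<^esub> x) \<in> relIl n R l" by (rule relI_eval[OF l])
  then have "evalw l f \<ominus>\<^bsub>CA\<^esub> evalw l x \<in> relIl n R l" using fc x
    by (simp add: a_minus_def)
  then have "relIl n R l +>\<^bsub>CA\<^esub> evalw l f = relIl n R l +>\<^bsub>CA\<^esub> evalw l x"
    using quot_eq_iff[OF relIl_ideal[OF l]] fc x by simp
  then show ?thesis unfolding gammal_def f_def[symmetric] .
qed

lemma gammal_hom: assumes l: "l \<in> K" shows "gammal n R l \<in> ring_hom A (algAl n R l)"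
proof -
  have phi: "(\<lambda>x. relIl n R l +>\<^bsub>CA\<^esub> evalw l x) \<in> ring_hom FA (algAl n R l)"
    using ring_hom_trans[OF evalw_homF[OF l] ideal.rcos_ring_hom[OF relIl_ideal[OF l]]]
    unfolding algAl_def by (simp add: comp_def)
  show ?thesis unfolding algA_def
    by (rule quot_hom[OF relI_ideal Al_ring[OF l] phi]) (simp add: gammal_rep[OF l])
qed

lemma scalA_carrier: "c \<in> F \<Longrightarrow> scalA F n R c \<in> carrier A"
  unfolding scalA_def algA_def using quot_mem[OF relI_ideal scal_carrier[OF srF]] by blast

lemma gammal_scalA: "l \<in> K \<Longrightarrow> c \<in> F \<Longrightarrow> gammal n R l (scalA F n R c) = scalAl n R l (evalF l c)"
  unfolding scalA_def scalAl_def by (simp add: gammal_rep scal_carrier[OF srF] evalw_scal)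

lemma scalAl_mult: assumes l: "l \<in> K" shows "scalAl n R l a \<otimes>\<^bsub>algAl n R l\<^esub> scalAl n R l b = scalAl n R l (a * b)"
proof -
  have "relIl n R l +>\<^bsub>CA\<^esub> (scal a \<otimes>\<^bsub>CA\<^esub> scal b) = (relIl n R l +>\<^bsub>CA\<^esub> scal a) \<otimes>\<^bsub>CA Quot relIl n R l\<^esub> (relIl n R l +>\<^bsub>CA\<^esub> scal b)"
    by (rule ring_hom_mult[OF ideal.rcos_ring_hom[OF relIl_ideal[OF l]] scal_carrier[OF sr_UNIV] scal_carrier[OF sr_UNIV]]) auto
  then show ?thesis unfolding scalAl_def algAl_def by (simp add: scal_scal)
qed

lemma scalAl_one: "l \<in> K \<Longrightarrow> scalAl n R l 1 = \<one>\<^bsub>algAl n R l\<^esub>"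
  unfolding scalAl_def algAl_def by (simp add: FactRing_def scal_one[of UNIV n])

lemma scalAl_carrier: "l \<in> K \<Longrightarrow> scalAl n R l a \<in> carrier (algAl n R l)"
  unfolding scalAl_def algAl_def using quot_mem[OF relIl_ideal scal_carrier[OF sr_UNIV]] by blast

lemma tF: "Fract [:-1, 1:] 1 \<in> F"
proof -
  have "Fract [:-1, 1:] 1 \<in> laurent_polys" unfolding laurent_polys_def
    by (rule CollectI, rule exI[of _ "[:-1, 1:]"], rule exI[of _ 0]) simp
  then show ?thesis using F_lower by blast
qed

lemma tm1_carrier: "tm1 F n R \<in> carrier A"
  unfolding tm1_def by (rule scalA_carrier[OF tF])

lemma gammal_tm1: "l \<in> K \<Longrightarrow> gammal n R l (tm1 F n R) = scalAl n R l (l - 1)"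
  unfolding tm1_def using gammal_scalA[OF _ tF] good_const[of l "[:-1, 1:]"] by simp

lemma scalA_central: assumes c: "c \<in> F" and X: "X \<in> carrier A"
  shows "scalA F n R c \<otimes>\<^bsub>A\<^esub> X = X \<otimes>\<^bsub>A\<^esub> scalA F n R c"
proof -
  obtain x where x: "x \<in> carrier FA" "X = relI F n R +>\<^bsub>FA\<^esub> x"
    using quot_carrier_ex[OF relI_ideal] X unfolding algA_def by blast
  have h: "(+>\<^bsub>FA\<^esub>) (relI F n R) \<in> ring_hom FA A" unfolding algA_def by (rule ideal.rcos_ring_hom[OF relI_ideal])
  show ?thesis unfolding scalA_def x(2)
    using ring_hom_mult[OF h scal_carrier[OF srF c] x(1)] ring_hom_mult[OF h x(1) scal_carrier[OF srF c]]
    by (simp add: scal_central)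
qed

lemma tm1_central: "X \<in> carrier A \<Longrightarrow> tm1 F n R \<otimes>\<^bsub>A\<^esub> X = X \<otimes>\<^bsub>A\<^esub> tm1 F n R"
  unfolding tm1_def by (rule scalA_central[OF tF])

end

lemma (in ring) minus_zero_eq: "a \<in> carrier R \<Longrightarrow> b \<in> carrier R \<Longrightarrow> a \<ominus> b = \<zero> \<Longrightarrow> a = b"
  by (metis a_minus_def add.inv_closed minus_equality r_neg)

lemma (in abelian_monoid) finsum_mono_zero:
  assumes "finite B" "A \<subseteq> B" "\<And>i. i \<in> B - A \<Longrightarrow> h i = \<zero>" "h \<in> B \<rightarrow> carrier G"
  shows "finsum G h A = finsum G h B"
proof -
  have eq: "A \<union> (B - A) = B" using assms by blast
  have d: "A \<inter> (B - A) = {}" by blast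
  have f: "finite A" "finite (B - A)" using assms by (auto intro: finite_subset)
  have hA: "h \<in> A \<rightarrow> carrier G" and hBA: "h \<in> (B - A) \<rightarrow> carrier G" using assms(2,4) by auto
  have "finsum G h (B - A) = finsum G (\<lambda>i. \<zero>) (B - A)"
    by (rule finsum_cong') (auto simp: assms(3))
  then have z: "finsum G h (B - A) = \<zero>" by simp
  have "finsum G h (A \<union> (B - A)) = finsum G h A \<oplus> finsum G h (B - A)"
    by (rule finsum_Un_disjoint[OF f d hA hBA])
  then have "finsum G h B = finsum G h A \<oplus> \<zero>" using eq z by simp
  also have "\<dots> = finsum G h A" by (rule r_zero[OF finsum_closed[OF hA]])
  finally show ?thesis by simp
qed

lemma (in ring) bracket_lemma:
  assumes c: "a \<in> carrier R" "a' \<in> carrier R" "b \<in> carrier R" "c \<in> carrier R" "d \<in> carrier R" "t \<in> carrier R"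
    and tb: "t \<otimes> b = b \<otimes> t"
    and e: "a' \<ominus> a = t \<otimes> d"
    and h: "t \<otimes> c = a' \<otimes> b \<ominus> b \<otimes> a'"
  shows "t \<otimes> (c \<ominus> (d \<otimes> b \<ominus> b \<otimes> d)) = a \<otimes> b \<ominus> b \<otimes> a"
proof -
  have "a \<oplus> (a' \<ominus> a) = a'" using c by algebra
  then have a': "a' = a \<oplus> t \<otimes> d" using e by simp
  have "t \<otimes> (c \<ominus> (d \<otimes> b \<ominus> b \<otimes> d)) = t \<otimes> c \<ominus> ((t \<otimes> d) \<otimes> b \<ominus> (b \<otimes> t) \<otimes> d)"
    using c by (simp add: r_minus r_distr a_minus_def m_assoc tb[symmetric])
  also have "\<dots> = (a \<oplus> t \<otimes> d) \<otimes> b \<ominus> b \<otimes> (a \<oplus> t \<otimes> d) \<ominus> ((t \<otimes> d) \<otimes> b \<ominus> (b \<otimes> t) \<otimes> d)"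
    using h a' by simp
  also have "\<dots> = a \<otimes> b \<ominus> b \<otimes> a" using c by algebra
  finally show ?thesis .
qed

context thsetup begin

lemma tI_ideal: "ideal (tI F n R) A"
  unfolding tI_def by (rule ring.genideal_ideal[OF A_ring]) (simp add: tm1_carrier)

lemma A1_ring: "ring (algA1 F n R)"
  unfolding algA1_def by (rule ideal.quotient_is_ring[OF tI_ideal])

lemma gamma1_hom: "gamma1 F n R \<in> ring_hom A (algA1 F n R)"
  unfolding gamma1_def algA1_def by (rule ideal.rcos_ring_hom[OF tI_ideal])

lemma tI_sub: assumes x: "x \<in> tI F n R" shows "\<exists>d\<in>carrier A. x = tm1 F n R \<otimes>\<^bsub>A\<^esub> d"
proof -
  interpret A: ring A by (rule A_ring)
  define P where "P = {y. \<exists>d\<in>carrier A. y = tm1 F n R \<otimes>\<^bsub>A\<^esub> d}"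
  have tc: "tm1 F n R \<in> carrier A" by (rule tm1_carrier)
  have Pc: "P \<subseteq> carrier A" using tc by (auto simp: P_def)
  have "ideal P A"
  proof (rule idealI[OF A_ring])
    show "subgroup P (add_monoid A)"
    proof (rule A.add.subgroupI)
      show "P \<subseteq> carrier A" using Pc by simp
      have "tm1 F n R \<otimes>\<^bsub>A\<^esub> \<zero>\<^bsub>A\<^esub> \<in> P" unfolding P_def by blast
      then show "P \<noteq> {}" by blast
    next
      fix y assume "y \<in> P"
      then obtain d where d: "d \<in> carrier A" "y = tm1 F n R \<otimes>\<^bsub>A\<^esub> d" unfolding P_def by blast
      have "\<ominus>\<^bsub>A\<^esub> y = tm1 F n R \<otimes>\<^bsub>A\<^esub> (\<ominus>\<^bsub>A\<^esub> d)" using d tc by (simp add: A.r_minus)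
      then show "\<ominus>\<^bsub>A\<^esub> y \<in> P" using d unfolding P_def by blast
    next
      fix y z assume "y \<in> P" "z \<in> P"
      then obtain d e where d: "d \<in> carrier A" "y = tm1 F n R \<otimes>\<^bsub>A\<^esub> d"
        and e: "e \<in> carrier A" "z = tm1 F n R \<otimes>\<^bsub>A\<^esub> e" unfolding P_def by blast
      have "y \<oplus>\<^bsub>A\<^esub> z = tm1 F n R \<otimes>\<^bsub>A\<^esub> (d \<oplus>\<^bsub>A\<^esub> e)" using d e tc by (simp add: A.r_distr)
      then show "y \<oplus>\<^bsub>A\<^esub> z \<in> P" using d e unfolding P_def by auto
    qed
  next
    fix y z assume "y \<in> P" "z \<in> carrier A"
    then obtain d where d: "d \<in> carrier A" "y = tm1 F n R \<otimes>\<^bsub>A\<^esub> d" unfolding P_def by blast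
    have "z \<otimes>\<^bsub>A\<^esub> y = tm1 F n R \<otimes>\<^bsub>A\<^esub> (z \<otimes>\<^bsub>A\<^esub> d)"
      using d tc \<open>z \<in> carrier A\<close> tm1_central[of z] by (simp add: A.m_assoc[symmetric])
    then show "z \<otimes>\<^bsub>A\<^esub> y \<in> P" using d \<open>z \<in> carrier A\<close> unfolding P_def by blast
    have "y \<otimes>\<^bsub>A\<^esub> z = tm1 F n R \<otimes>\<^bsub>A\<^esub> (d \<otimes>\<^bsub>A\<^esub> z)"
      using d tc \<open>z \<in> carrier A\<close> by (simp add: A.m_assoc)
    then show "y \<otimes>\<^bsub>A\<^esub> z \<in> P" using d \<open>z \<in> carrier A\<close> unfolding P_def by blast
  qed
  moreover have "{tm1 F n R} \<subseteq> P" unfolding P_def using tc by (auto intro!: bexI[of _ "\<one>\<^bsub>A\<^esub>"])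
  ultimately have "tI F n R \<subseteq> P" unfolding tI_def by (rule A.genideal_minimal)
  then show ?thesis using x unfolding P_def by blast
qed

lemma scalAl_zero: assumes l: "l \<in> K" shows "scalAl n R l 0 = \<zero>\<^bsub>algAl n R l\<^esub>"
proof -
  have "scal (0::complex) = \<zero>\<^bsub>CA\<^esub>" by (simp add: fa_zero scal_def fun_eq_iff)
  then show ?thesis unfolding scalAl_def algAl_def
    using ring_hom_zero[OF ideal.rcos_ring_hom[OF relIl_ideal[OF l]] CA_ring ideal.quotient_is_ring[OF relIl_ideal[OF l]]]
    by simp
qed

end

locale thmain = thsetup K F n R for K F n R +
  fixes J :: "'i set" and xi :: "'i \<Rightarrow> (nat list \<Rightarrow> ratfun) set"
  assumes K_inf: "infinite K"
    and basis_A: "is_basis (algA F n R) (scalA F n R) F J xi"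
    and basis_Al: "\<forall>l\<in>K. is_basis (algAl n R l) (scalAl n R l) (UNIV :: complex set) J
                      (\<lambda>i. gammal n R l (xi i))"
begin

lemma xiA: assumes "i \<in> J" shows "xi i \<in> carrier A"
proof -
  have "xi \<in> J \<rightarrow> carrier A" using basis_A unfolding is_basis_def by (rule conjunct1)
  then show ?thesis using assms by (rule funcset_mem)
qed

lemma gammal_zero:
  assumes a: "a \<in> carrier A" and z: "\<And>l. l \<in> K \<Longrightarrow> gammal n R l a = \<zero>\<^bsub>algAl n R l\<^esub>"
  shows "a = \<zero>\<^bsub>A\<^esub>"
proof -
  interpret A: ring A by (rule A_ring)
  have "\<forall>x\<in>carrier A. \<exists>!c. c \<in> J \<rightarrow>\<^sub>E F \<and> finite {i\<in>J. c i \<noteq> 0} \<and>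
          x = finsum A (\<lambda>i. scalA F n R (c i) \<otimes>\<^bsub>A\<^esub> xi i) {i\<in>J. c i \<noteq> 0}"
    using basis_A unfolding is_basis_def by (rule conjunct2)
  then have "\<exists>!c. c \<in> J \<rightarrow>\<^sub>E F \<and> finite {i\<in>J. c i \<noteq> 0} \<and>
          a = finsum A (\<lambda>i. scalA F n R (c i) \<otimes>\<^bsub>A\<^esub> xi i) {i\<in>J. c i \<noteq> 0}"
    using a by (rule bspec)
  then obtain c where c: "c \<in> J \<rightarrow>\<^sub>E F" "finite {i\<in>J. c i \<noteq> 0}"
    and ac: "a = finsum A (\<lambda>i. scalA F n R (c i) \<otimes>\<^bsub>A\<^esub> xi i) {i\<in>J. c i \<noteq> 0}"
    by (metis (no_types, lifting) ex1_implies_ex)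
  define S where "S = {i\<in>J. c i \<noteq> 0}"
  have cF: "i \<in> J \<Longrightarrow> c i \<in> F" for i using c(1) by auto
  have trm: "(\<lambda>i. scalA F n R (c i) \<otimes>\<^bsub>A\<^esub> xi i) \<in> S \<rightarrow> carrier A"
  proof (rule Pi_I)
    fix j assume "j \<in> S"
    then have jJ: "j \<in> J" by (simp add: S_def)
    show "scalA F n R (c j) \<otimes>\<^bsub>A\<^esub> xi j \<in> carrier A"
      by (rule A.m_closed[OF scalA_carrier[OF cF[OF jJ]] xiA[OF jJ]])
  qed
  have ev0: "evalF l (c i) = 0" if l: "l \<in> K" and i: "i \<in> S" for l i
  proof -
    interpret Al: ring "algAl n R l" by (rule Al_ring[OF l])
    have hom: "gammal n R l \<in> ring_hom A (algAl n R l)" by (rule gammal_hom[OF l])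
    define c' where "c' = (\<lambda>i\<in>J. evalF l (c i))"
    define S' where "S' = {i\<in>J. c' i \<noteq> 0}"
    have S'S: "S' \<subseteq> S" unfolding S'_def S_def c'_def using good_0 by auto
    have finS: "finite S" using c(2) by (simp add: S_def)
    have gxi: "j \<in> J \<Longrightarrow> gammal n R l (xi j) \<in> carrier (algAl n R l)" for j
      using ring_hom_closed[OF hom xiA] by blast
    have t2: "(\<lambda>j. scalAl n R l (c' j) \<otimes>\<^bsub>algAl n R l\<^esub> gammal n R l (xi j)) \<in> S \<rightarrow> carrier (algAl n R l)"
      using gxi scalAl_carrier[OF l] by (auto simp: S_def)
    have "\<zero>\<^bsub>algAl n R l\<^esub> = gammal n R l a" using z[OF l] by simp
    also have "\<dots> = finsum (algAl n R l) (gammal n R l \<circ> (\<lambda>i. scalA F n R (c i) \<otimes>\<^bsub>A\<^esub> xi i)) S"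
      unfolding ac S_def[symmetric] by (rule hom_finsum'[OF A_ring Al_ring[OF l] hom trm])
    also have "\<dots> = finsum (algAl n R l) (\<lambda>j. scalAl n R l (c' j) \<otimes>\<^bsub>algAl n R l\<^esub> gammal n R l (xi j)) S"
    proof (rule Al.finsum_cong'[OF refl t2])
      fix j assume j: "j \<in> S"
      then have jJ: "j \<in> J" by (simp add: S_def)
      show "(gammal n R l \<circ> (\<lambda>i. scalA F n R (c i) \<otimes>\<^bsub>A\<^esub> xi i)) j = scalAl n R l (c' j) \<otimes>\<^bsub>algAl n R l\<^esub> gammal n R l (xi j)"
        using ring_hom_mult[OF hom scalA_carrier[OF cF[OF jJ]] xiA[OF jJ]] gammal_scalA[OF l cF[OF jJ]] jJ
        by (simp add: c'_def)
    qed
    also have "\<dots> = finsum (algAl n R l) (\<lambda>j. scalAl n R l (c' j) \<otimes>\<^bsub>algAl n R l\<^esub> gammal n R l (xi j)) S'"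
    proof (rule Al.finsum_mono_zero[OF finS S'S _ t2, symmetric])
      fix j assume "j \<in> S - S'"
      then have "c' j = 0" "j \<in> J" by (auto simp: S'_def S_def)
      then show "scalAl n R l (c' j) \<otimes>\<^bsub>algAl n R l\<^esub> gammal n R l (xi j) = \<zero>\<^bsub>algAl n R l\<^esub>"
        using scalAl_zero[OF l] gxi by simp
    qed
    finally have rep': "\<zero>\<^bsub>algAl n R l\<^esub> = finsum (algAl n R l) (\<lambda>j. scalAl n R l (c' j) \<otimes>\<^bsub>algAl n R l\<^esub> gammal n R l (xi j)) {j\<in>J. c' j \<noteq> 0}"
      by (simp add: S'_def)
    define c0 where "c0 = (\<lambda>i\<in>J. (0::complex))"
    have rep0: "\<zero>\<^bsub>algAl n R l\<^esub> = finsum (algAl n R l) (\<lambda>j. scalAl n R l (c0 j) \<otimes>\<^bsub>algAl n R l\<^esub> gammal n R l (xi j)) {j\<in>J. c0 j \<noteq> 0}"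
      by (simp add: c0_def)
    have c'P: "c' \<in> J \<rightarrow>\<^sub>E UNIV" "finite {j\<in>J. c' j \<noteq> 0}"
      using finite_subset[OF S'S finS] by (auto simp: c'_def S'_def)
    have c0P: "c0 \<in> J \<rightarrow>\<^sub>E UNIV" "finite {j\<in>J. c0 j \<noteq> 0}" by (auto simp: c0_def)
    define Q where "Q = (\<lambda>c. c \<in> J \<rightarrow>\<^sub>E (UNIV::complex set) \<and> finite {i\<in>J. c i \<noteq> 0} \<and>
          \<zero>\<^bsub>algAl n R l\<^esub> = finsum (algAl n R l) (\<lambda>i. scalAl n R l (c i) \<otimes>\<^bsub>algAl n R l\<^esub> gammal n R l (xi i)) {i\<in>J. c i \<noteq> 0})"
    have bl: "is_basis (algAl n R l) (scalAl n R l) (UNIV :: complex set) J (\<lambda>i. gammal n R l (xi i))"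
      using basis_Al l by (rule bspec)
    have "\<forall>x\<in>carrier (algAl n R l). \<exists>!c. c \<in> J \<rightarrow>\<^sub>E (UNIV::complex set) \<and> finite {i\<in>J. c i \<noteq> 0} \<and>
          x = finsum (algAl n R l) (\<lambda>i. scalAl n R l (c i) \<otimes>\<^bsub>algAl n R l\<^esub> gammal n R l (xi i)) {i\<in>J. c i \<noteq> 0}"
      using bl unfolding is_basis_def by (rule conjunct2)
    then have uq: "\<exists>!c. Q c" unfolding Q_def using Al.zero_closed by (rule bspec)
    have "Q c'" unfolding Q_def using c'P rep' by simp
    moreover have "Q c0" unfolding Q_def using c0P rep0 by simp
    ultimately have "c' = c0" using uq by (metis ex1E)
    then have "c' i = c0 i" by simp
    then show ?thesis using i by (simp add: c'_def c0_def S_def)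
  qed
  have "S = {}"
  proof (rule ccontr)
    assume "S \<noteq> {}"
    then obtain i where i: "i \<in> S" by blast
    then have "c i \<in> admissible K" using cF F_upper by (auto simp: S_def)
    then obtain p q where pq: "c i = Fract p q" "\<forall>l\<in>K. poly q l \<noteq> 0"
      unfolding admissible_def by blast
    have "poly p l = 0" if l: "l \<in> K" for l
      using ev0[OF l i] pq evalF_eq[of q l p] l by simp
    then have "K \<subseteq> {x. poly p x = 0}" by blast
    have "p = 0"
    proof (rule ccontr)
      assume "p \<noteq> 0"
      then have "finite {x. poly p x = 0}" by (rule poly_roots_finite)
      then have "finite K" using \<open>K \<subseteq> {x. poly p x = 0}\<close> by (rule finite_subset[rotated])
      then show False using K_inf by simp
    qed
    then have "c i = 0" using pq by (simp add: Zero_fract_def eq_fract(3))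
    then show False using i by (simp add: S_def)
  qed
  then show ?thesis using ac by (simp add: S_def[symmetric])
qed

lemma gammahat_inj: "inj_on (gammahat K n R) (carrier A)"
proof (rule inj_onI)
  interpret A: ring A by (rule A_ring)
  fix a b assume a: "a \<in> carrier A" and b: "b \<in> carrier A" and eq: "gammahat K n R a = gammahat K n R b"
  have "gammal n R l (a \<ominus>\<^bsub>A\<^esub> b) = \<zero>\<^bsub>algAl n R l\<^esub>" if l: "l \<in> K" for l
  proof -
    interpret Al: ring "algAl n R l" by (rule Al_ring[OF l])
    interpret h: ring_hom_ring A "algAl n R l" "gammal n R l"
      using gammal_hom[OF l] A_ring Al_ring[OF l] by (simp add: ring_hom_ringI2)
    have "gammal n R l a = gammal n R l b" using fun_cong[OF eq, of l] l by (simp add: gammahat_def)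
    then show ?thesis using a b by (simp add: a_minus_def Al.r_neg)
  qed
  then have "a \<ominus>\<^bsub>A\<^esub> b = \<zero>\<^bsub>A\<^esub>" using a b by (intro gammal_zero) auto
  then show "a = b" using a b by (rule A.minus_zero_eq[rotated 2])
qed

end

context thmain begin

lemma gl_closed: "l \<in> K \<Longrightarrow> x \<in> carrier A \<Longrightarrow> gammal n R l x \<in> carrier (algAl n R l)"
  by (rule ring_hom_closed[OF gammal_hom])
lemma gl_mult: "l \<in> K \<Longrightarrow> x \<in> carrier A \<Longrightarrow> y \<in> carrier A \<Longrightarrow>
    gammal n R l (x \<otimes>\<^bsub>A\<^esub> y) = gammal n R l x \<otimes>\<^bsub>algAl n R l\<^esub> gammal n R l y"
  by (rule ring_hom_mult[OF gammal_hom])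
lemma gl_add: "l \<in> K \<Longrightarrow> x \<in> carrier A \<Longrightarrow> y \<in> carrier A \<Longrightarrow>
    gammal n R l (x \<oplus>\<^bsub>A\<^esub> y) = gammal n R l x \<oplus>\<^bsub>algAl n R l\<^esub> gammal n R l y"
  by (rule ring_hom_add[OF gammal_hom])
lemma gl_one: "l \<in> K \<Longrightarrow> gammal n R l \<one>\<^bsub>A\<^esub> = \<one>\<^bsub>algAl n R l\<^esub>"
  by (rule ring_hom_one[OF gammal_hom])

lemma gammahat_hom: "gammahat K n R \<in> ring_hom A (Ahat K n R)"
proof (rule ring_hom_memI)
  fix x assume x: "x \<in> carrier A"
  show "gammahat K n R x \<in> carrier (Ahat K n R)"
    unfolding Ahat_def prod_ring_def gammahat_def using gl_closed x by auto
next
  fix x y assume x: "x \<in> carrier A" and y: "y \<in> carrier A"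
  show "gammahat K n R (x \<otimes>\<^bsub>A\<^esub> y) = gammahat K n R x \<otimes>\<^bsub>Ahat K n R\<^esub> gammahat K n R y"
    unfolding Ahat_def prod_ring_def gammahat_def
    using gl_mult x y by (auto simp: fun_eq_iff)
  show "gammahat K n R (x \<oplus>\<^bsub>A\<^esub> y) = gammahat K n R x \<oplus>\<^bsub>Ahat K n R\<^esub> gammahat K n R y"
    unfolding Ahat_def prod_ring_def gammahat_def
    using gl_add x y by (auto simp: fun_eq_iff)
next
  show "gammahat K n R \<one>\<^bsub>A\<^esub> = \<one>\<^bsub>Ahat K n R\<^esub>"
    unfolding Ahat_def prod_ring_def gammahat_def
    using gl_one by (auto simp: fun_eq_iff)
qed

lemma gammahat_tm1:
  assumes u: "u \<in> carrier A"
  shows "gammahat K n R u = (\<lambda>l\<in>K. scalAl n R l (1 / (l - 1))) \<otimes>\<^bsub>Ahat K n R\<^esub> gammahat K n R (tm1 F n R \<otimes>\<^bsub>A\<^esub> u)"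
proof -
  have "gammal n R l u = scalAl n R l (1 / (l - 1)) \<otimes>\<^bsub>algAl n R l\<^esub> gammal n R l (tm1 F n R \<otimes>\<^bsub>A\<^esub> u)"
    if l: "l \<in> K" for l
  proof -
    interpret Al: ring "algAl n R l" by (rule Al_ring[OF l])
    have l1: "l \<noteq> 1" using l K_sub by auto
    have gu: "gammal n R l u \<in> carrier (algAl n R l)" using ring_hom_closed[OF gammal_hom[OF l] u] .
    have "scalAl n R l (1 / (l - 1)) \<otimes>\<^bsub>algAl n R l\<^esub> gammal n R l (tm1 F n R \<otimes>\<^bsub>A\<^esub> u)
        = scalAl n R l (1 / (l - 1)) \<otimes>\<^bsub>algAl n R l\<^esub> (scalAl n R l (l - 1) \<otimes>\<^bsub>algAl n R l\<^esub> gammal n R l u)"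
      using ring_hom_mult[OF gammal_hom[OF l] tm1_carrier u] gammal_tm1[OF l] by simp
    also have "\<dots> = (scalAl n R l (1 / (l - 1)) \<otimes>\<^bsub>algAl n R l\<^esub> scalAl n R l (l - 1)) \<otimes>\<^bsub>algAl n R l\<^esub> gammal n R l u"
      using scalAl_carrier[OF l] gu by (simp add: Al.m_assoc)
    also have "\<dots> = gammal n R l u"
      using scalAl_mult[OF l] scalAl_one[OF l] l1 gu by simp
    finally show ?thesis by simp
  qed
  then show ?thesis unfolding Ahat_def prod_ring_def gammahat_def by (auto simp: fun_eq_iff)
qed

lemma s_carrier: "(\<lambda>l\<in>K. scalAl n R l (1 / (l - 1))) \<in> carrier (Ahat K n R)"
  unfolding Ahat_def prod_ring_def using scalAl_carrier by auto

end

context thmain begin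

lemma poisson_part:
  assumes I: "ideal I (Ahat K n R)"
    and A1_comm: "\<forall>x\<in>carrier (algA1 F n R). \<forall>y\<in>carrier (algA1 F n R).
                    x \<otimes>\<^bsub>algA1 F n R\<^esub> y = y \<otimes>\<^bsub>algA1 F n R\<^esub> x"
  shows "poisson_ideal F n R
              ((gamma1 F n R \<circ> inv_into (carrier A) (gammahat K n R))
                 ` (I \<inter> gammahat K n R ` carrier A))"
proof -
  interpret A: ring A by (rule A_ring)
  interpret A1: ring "algA1 F n R" by (rule A1_ring)
  interpret Ah: ring "Ahat K n R" using I by (rule ideal.axioms(2))
  interpret gh: ring_hom_ring A "Ahat K n R" "gammahat K n R"
    using gammahat_hom A_ring by (simp add: ring_hom_ringI2 Ah.ring_axioms)
  define P where "P = {r \<in> carrier A. gammahat K n R r \<in> I}"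
  have Pid: "ideal P A" unfolding P_def by (rule gh.ideal_vimage[OF I])
  interpret PI: ideal P A by (rule Pid)
  have seteq: "(gamma1 F n R \<circ> inv_into (carrier A) (gammahat K n R)) ` (I \<inter> gammahat K n R ` carrier A)
      = gamma1 F n R ` P"
  proof
    show "(gamma1 F n R \<circ> inv_into (carrier A) (gammahat K n R)) ` (I \<inter> gammahat K n R ` carrier A) \<subseteq> gamma1 F n R ` P"
    proof
      fix z assume "z \<in> (gamma1 F n R \<circ> inv_into (carrier A) (gammahat K n R)) ` (I \<inter> gammahat K n R ` carrier A)"
      then obtain y where y: "y \<in> I \<inter> gammahat K n R ` carrier A"
        and zy: "z = (gamma1 F n R \<circ> inv_into (carrier A) (gammahat K n R)) y" by (rule imageE)
      from y obtain a where a: "a \<in> carrier A" "y = gammahat K n R a" by blast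
      have ia: "inv_into (carrier A) (gammahat K n R) (gammahat K n R a) = a"
        by (rule inv_into_f_f[OF gammahat_inj a(1)])
      have aP: "a \<in> P" unfolding P_def using a y by blast
      have "z = gamma1 F n R a" unfolding zy a(2) comp_apply ia by (rule refl)
      then show "z \<in> gamma1 F n R ` P" using aP by (rule image_eqI)
    qed
  next
    show "gamma1 F n R ` P \<subseteq> (gamma1 F n R \<circ> inv_into (carrier A) (gammahat K n R)) ` (I \<inter> gammahat K n R ` carrier A)"
    proof
      fix z assume "z \<in> gamma1 F n R ` P"
      then obtain a where aP: "a \<in> P" and z: "z = gamma1 F n R a" by (rule imageE)
      have a: "a \<in> carrier A" "gammahat K n R a \<in> I" using aP unfolding P_def by blast+
      have ia: "inv_into (carrier A) (gammahat K n R) (gammahat K n R a) = a"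
        by (rule inv_into_f_f[OF gammahat_inj a(1)])
      have y: "gammahat K n R a \<in> I \<inter> gammahat K n R ` carrier A" using a by blast
      have "z = (gamma1 F n R \<circ> inv_into (carrier A) (gammahat K n R)) (gammahat K n R a)"
        unfolding comp_apply ia by (rule z)
      then show "z \<in> (gamma1 F n R \<circ> inv_into (carrier A) (gammahat K n R)) ` (I \<inter> gammahat K n R ` carrier A)"
        using y by (rule image_eqI)
    qed
  qed
  have g1: "gamma1 F n R = (+>\<^bsub>A\<^esub>) (tI F n R)" by (simp add: gamma1_def fun_eq_iff)
  have idl: "ideal (gamma1 F n R ` P) (algA1 F n R)"
    unfolding g1 algA1_def by (rule A.ring_ideal_imp_quot_ideal[OF tI_ideal Pid])
  have hom1: "gamma1 F n R \<in> ring_hom A (algA1 F n R)" by (rule gamma1_hom)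
  have g1c: "x \<in> carrier A \<Longrightarrow> gamma1 F n R x \<in> carrier (algA1 F n R)" for x
    by (rule ring_hom_closed[OF hom1])
  have g1m: "x \<in> carrier A \<Longrightarrow> y \<in> carrier A \<Longrightarrow> gamma1 F n R (x \<otimes>\<^bsub>A\<^esub> y) = gamma1 F n R x \<otimes>\<^bsub>algA1 F n R\<^esub> gamma1 F n R y" for x y
    by (rule ring_hom_mult[OF hom1])
  have g1a: "x \<in> carrier A \<Longrightarrow> y \<in> carrier A \<Longrightarrow> gamma1 F n R (x \<oplus>\<^bsub>A\<^esub> y) = gamma1 F n R x \<oplus>\<^bsub>algA1 F n R\<^esub> gamma1 F n R y" for x y
    by (rule ring_hom_add[OF hom1])
  interpret g1: ring_hom_ring A "algA1 F n R" "gamma1 F n R"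
    using hom1 A_ring A1_ring by (simp add: ring_hom_ringI2)
  have g1i: "x \<in> carrier A \<Longrightarrow> gamma1 F n R (\<ominus>\<^bsub>A\<^esub> x) = \<ominus>\<^bsub>algA1 F n R\<^esub> gamma1 F n R x" for x
    by (rule g1.hom_a_inv)
  have comm0: "gamma1 F n R (x \<otimes>\<^bsub>A\<^esub> y \<ominus>\<^bsub>A\<^esub> y \<otimes>\<^bsub>A\<^esub> x) = \<zero>\<^bsub>algA1 F n R\<^esub>"
    if x: "x \<in> carrier A" and y: "y \<in> carrier A" for x y
  proof -
    have "gamma1 F n R (x \<otimes>\<^bsub>A\<^esub> y \<ominus>\<^bsub>A\<^esub> y \<otimes>\<^bsub>A\<^esub> x)
        = gamma1 F n R x \<otimes>\<^bsub>algA1 F n R\<^esub> gamma1 F n R y \<oplus>\<^bsub>algA1 F n R\<^esub> \<ominus>\<^bsub>algA1 F n R\<^esub> (gamma1 F n R y \<otimes>\<^bsub>algA1 F n R\<^esub> gamma1 F n R x)"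
      using x y by (simp add: a_minus_def g1a g1i g1m)
    also have "\<dots> = \<zero>\<^bsub>algA1 F n R\<^esub>"
      using A1_comm g1c x y by (simp add: A1.r_neg)
    finally show ?thesis .
  qed
  have bracket: "pbracket F n R X Y \<in> gamma1 F n R ` P"
    if X: "X \<in> gamma1 F n R ` P" and Y: "Y \<in> carrier (algA1 F n R)" for X Y
  proof -
    obtain a where a: "a \<in> P" "X = gamma1 F n R a" using X by blast
    have aA: "a \<in> carrier A" using a(1) unfolding P_def by blast
    obtain b where b: "b \<in> carrier A" "Y = gamma1 F n R b"
      using quot_carrier_ex[OF tI_ideal] Y unfolding algA1_def gamma1_def by blast
    have xc: "a \<otimes>\<^bsub>A\<^esub> b \<ominus>\<^bsub>A\<^esub> b \<otimes>\<^bsub>A\<^esub> a \<in> carrier A"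
      by (intro A.minus_closed A.m_closed aA b(1))
    have "a \<otimes>\<^bsub>A\<^esub> b \<ominus>\<^bsub>A\<^esub> b \<otimes>\<^bsub>A\<^esub> a \<in> tI F n R"
      using comm0[OF aA b(1)] quot_zero_iff[OF tI_ideal xc]
      unfolding gamma1_def algA1_def by blast
    then obtain c where c: "c \<in> carrier A" "a \<otimes>\<^bsub>A\<^esub> b \<ominus>\<^bsub>A\<^esub> b \<otimes>\<^bsub>A\<^esub> a = tm1 F n R \<otimes>\<^bsub>A\<^esub> c"
      using tI_sub by blast
    define Q where "Q = (\<lambda>z. \<exists>a b c. a \<in> carrier A \<and> b \<in> carrier A
      \<and> c \<in> carrier A \<and> gamma1 F n R a = X \<and> gamma1 F n R b = Y
      \<and> tm1 F n R \<otimes>\<^bsub>A\<^esub> c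
          = a \<otimes>\<^bsub>A\<^esub> b \<ominus>\<^bsub>A\<^esub> b \<otimes>\<^bsub>A\<^esub> a
      \<and> z = gamma1 F n R c)"
    have "Q (gamma1 F n R c)" unfolding Q_def
      by (rule exI[of _ a], rule exI[of _ b], rule exI[of _ c]) (use aA b c a(2) in auto)
    then have "Q (pbracket F n R X Y)" unfolding pbracket_def Q_def[symmetric] by (rule someI)
    then obtain a' b' c' where a': "a' \<in> carrier A" and b': "b' \<in> carrier A" and c': "c' \<in> carrier A"
      and ga: "gamma1 F n R a' = X" and gb: "gamma1 F n R b' = Y"
      and tc: "tm1 F n R \<otimes>\<^bsub>A\<^esub> c' = a' \<otimes>\<^bsub>A\<^esub> b' \<ominus>\<^bsub>A\<^esub> b' \<otimes>\<^bsub>A\<^esub> a'"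
      and z: "pbracket F n R X Y = gamma1 F n R c'"
      unfolding Q_def by blast
    have "tI F n R +>\<^bsub>A\<^esub> a' = tI F n R +>\<^bsub>A\<^esub> a" using ga a(2) unfolding gamma1_def by (rule trans)
    then have "a' \<ominus>\<^bsub>A\<^esub> a \<in> tI F n R"
      using quot_eq_iff[OF tI_ideal a' aA] by blast
    then obtain d where d: "d \<in> carrier A" "a' \<ominus>\<^bsub>A\<^esub> a = tm1 F n R \<otimes>\<^bsub>A\<^esub> d"
      using tI_sub by blast
    define u where "u = c' \<ominus>\<^bsub>A\<^esub> (d \<otimes>\<^bsub>A\<^esub> b' \<ominus>\<^bsub>A\<^esub> b' \<otimes>\<^bsub>A\<^esub> d)"
    have bd: "d \<otimes>\<^bsub>A\<^esub> b' \<ominus>\<^bsub>A\<^esub> b' \<otimes>\<^bsub>A\<^esub> d \<in> carrier A"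
      by (intro A.minus_closed A.m_closed d(1) b')
    have uA: "u \<in> carrier A" unfolding u_def by (intro A.minus_closed c' bd)
    have tu: "tm1 F n R \<otimes>\<^bsub>A\<^esub> u = a \<otimes>\<^bsub>A\<^esub> b' \<ominus>\<^bsub>A\<^esub> b' \<otimes>\<^bsub>A\<^esub> a"
      unfolding u_def
      by (rule A.bracket_lemma[OF aA a' b' c' d(1) tm1_carrier tm1_central[OF b'] d(2) tc])
    have "a \<otimes>\<^bsub>A\<^esub> b' \<in> P" using a(1) b' by (rule PI.I_r_closed)
    moreover have "b' \<otimes>\<^bsub>A\<^esub> a \<in> P" using a(1) b' by (rule PI.I_l_closed)
    ultimately have "a \<otimes>\<^bsub>A\<^esub> b' \<ominus>\<^bsub>A\<^esub> b' \<otimes>\<^bsub>A\<^esub> a \<in> P"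
      unfolding a_minus_def by (intro PI.a_closed PI.a_inv_closed)
    then have tuP: "tm1 F n R \<otimes>\<^bsub>A\<^esub> u \<in> P" unfolding tu .
    then have "gammahat K n R (tm1 F n R \<otimes>\<^bsub>A\<^esub> u) \<in> I" unfolding P_def by blast
    then have "(\<lambda>l\<in>K. scalAl n R l (1 / (l - 1))) \<otimes>\<^bsub>Ahat K n R\<^esub> gammahat K n R (tm1 F n R \<otimes>\<^bsub>A\<^esub> u) \<in> I"
      using s_carrier by (rule ideal.I_l_closed[OF I])
    then have "gammahat K n R u \<in> I" unfolding gammahat_tm1[OF uA, symmetric] .
    then have uP: "u \<in> P" using uA unfolding P_def by blast
    have "c' = u \<oplus>\<^bsub>A\<^esub> (d \<otimes>\<^bsub>A\<^esub> b' \<ominus>\<^bsub>A\<^esub> b' \<otimes>\<^bsub>A\<^esub> d)"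
      unfolding u_def using c' bd by algebra
    then have "gamma1 F n R c' = gamma1 F n R (u \<oplus>\<^bsub>A\<^esub> (d \<otimes>\<^bsub>A\<^esub> b' \<ominus>\<^bsub>A\<^esub> b' \<otimes>\<^bsub>A\<^esub> d))"
      by (rule arg_cong)
    also have "\<dots> = gamma1 F n R u \<oplus>\<^bsub>algA1 F n R\<^esub> gamma1 F n R (d \<otimes>\<^bsub>A\<^esub> b' \<ominus>\<^bsub>A\<^esub> b' \<otimes>\<^bsub>A\<^esub> d)"
      by (rule g1a[OF uA bd])
    also have "\<dots> = gamma1 F n R u" unfolding comm0[OF d(1) b'] by (rule A1.r_zero[OF g1c[OF uA]])
    finally have "pbracket F n R X Y = gamma1 F n R u" unfolding z .
    then show ?thesis using uP by (rule image_eqI)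
  qed
  show ?thesis unfolding seteq poisson_ideal_def using idl bracket by blast
qed

end

theorem theorem1p4:
  fixes K :: "complex set" and F :: "ratfun set" and n :: nat
    and R :: "(nat list \<Rightarrow> ratfun) set"
    and J :: "'i set" and xi :: "'i \<Rightarrow> (nat list \<Rightarrow> ratfun) set"
  assumes K_inf: "infinite K" and K_sub: "K \<subseteq> - {0, 1}"
    and F_ring: "is_subring_set F"
    and F_lower: "laurent_polys \<subseteq> F"
    and F_upper: "F \<subseteq> admissible K"
    and R_fin: "finite R"
    and R_sub: "R \<subseteq> carrier (free_alg F n)"
    and t_nonzero: "tm1 F n R \<noteq> \<zero>\<^bsub>algA F n R\<^esub>"
    and t_nonunit: "tm1 F n R \<notin> Units (algA F n R)"
    and t_nzd: "\<forall>a\<in>carrier (algA F n R).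
                  (tm1 F n R \<otimes>\<^bsub>algA F n R\<^esub> a = \<zero>\<^bsub>algA F n R\<^esub>
                   \<or> a \<otimes>\<^bsub>algA F n R\<^esub> tm1 F n R = \<zero>\<^bsub>algA F n R\<^esub>)
                  \<longrightarrow> a = \<zero>\<^bsub>algA F n R\<^esub>"
    and A1_comm: "\<forall>x\<in>carrier (algA1 F n R). \<forall>y\<in>carrier (algA1 F n R).
                    x \<otimes>\<^bsub>algA1 F n R\<^esub> y = y \<otimes>\<^bsub>algA1 F n R\<^esub> x"
    and basis_A: "is_basis (algA F n R) (scalA F n R) F J xi"
    and basis_A1: "is_basis (algA1 F n R) (\<lambda>c. gamma1 F n R (scalA F n R (Fract [:c:] 1)))
                      (UNIV :: complex set) J (\<lambda>i. gamma1 F n R (xi i))"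
    and basis_Al: "\<forall>l\<in>K. is_basis (algAl n R l) (scalAl n R l) (UNIV :: complex set) J
                      (\<lambda>i. gammal n R l (xi i))"
  shows "inj_on (gammahat K n R) (carrier (algA F n R)) \<and>
         (\<forall>I. ideal I (Ahat K n R) \<longrightarrow>
            poisson_ideal F n R
              ((gamma1 F n R \<circ> inv_into (carrier (algA F n R)) (gammahat K n R))
                 ` (I \<inter> gammahat K n R ` carrier (algA F n R))))"
proof -
  interpret thmain K F n R J xi
    by (unfold_locales) (fact F_ring F_lower F_upper R_sub K_sub K_inf basis_A basis_Al)+
  show ?thesis using gammahat_inj poisson_part[OF _ A1_comm] by blast
qed

end
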